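(* Let ${\bf A},{\bf B}\in\mathbb C^{N\times N}$ be such that ${\bf Q}:={\bf A}\otimes\mathbb 1_N+\mathbb 1_N\otimes{\bf B}^{\rm T}$ is normal and invertible, and let $\mathbf C\in\mathbb C^{N\times N}$. Then the unique solution ${\bf X}$ of ${\bf A}{\bf X}+{\bf X}{\bf B}=\mathbf C$ is given by the (iterated, outer integral in $t$) integral $${\bf X}=\frac1{2\pi}\int_0^\infty{\rm d}t\int_{-\infty}^{\infty}{\rm d}\omega\int_{-\infty}^{\infty}{\rm d}\omega'\,e^{-(\omega^2+\omega'^2)/2}(\mathrm i\omega+\omega')\,e^{-\mathrm i\omega t{\bf A}_H-\mathrm i\omega't{\bf A}_S}\,\mathbf C\,e^{-\mathrm i\omega t{\bf B}_H-\mathrm i\omega't{\bf B}_S}.$$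
   Context: For a square matrix ${\bf M}$, ${\bf M}_H:=({\bf M}+{\bf M}^\dagger)/2$ and ${\bf M}_S:=({\bf M}-{\bf M}^\dagger)/(2\mathrm i)$, so ${\bf M}={\bf M}_H+\mathrm i{\bf M}_S$. ${\bf B}^{\rm T}$ is the transpose. *)

theory Defs
  imports "HOL-Analysis.Analysis"
begin

definition cadj :: "complex^'n^'m \<Rightarrow> complex^'m^'n" where
  "cadj M = (\<chi> i j. cnj (M $ j $ i))"

definition csc :: "complex \<Rightarrow> complex^'n^'m \<Rightarrow> complex^'n^'m" where
  "csc c M = (\<chi> i j. c * M $ i $ j)"

definition herm_part :: "complex^'n^'n \<Rightarrow> complex^'n^'n" where
  "herm_part M = csc (1/2) (M + cadj M)"

definition skew_part :: "complex^'n^'n \<Rightarrow> complex^'n^'n" where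
  "skew_part M = csc (1 / (2 * \<i>)) (M - cadj M)"

fun mpow :: "complex^'n^'n \<Rightarrow> nat \<Rightarrow> complex^'n^'n" where
  "mpow M 0 = mat 1"
| "mpow M (Suc k) = M ** mpow M k"

definition mexp :: "complex^'n^'n \<Rightarrow> complex^'n^'n" where
  "mexp M = (\<Sum>k. (1 / fact k) *\<^sub>R mpow M k)"

text \<open>Kronecker sum A (x) 1 + 1 (x) B^T, indexed by pairs: entry ((i,j),(k,l)) =
  A_ik delta_jl + delta_ik B^T_jl, with B^T_jl = B_lj.\<close>
definition kron_sum :: "complex^'n^'n \<Rightarrow> complex^'n^'n \<Rightarrow> complex^('n\<times>'n)^('n\<times>'n)" where
  "kron_sum A B = (\<chi> p q. A $ fst p $ fst q * (if snd p = snd q then 1 else 0)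
                                 + (if fst p = fst q then 1 else 0) * B $ snd q $ snd p)"

definition normal_mat :: "complex^'n^'n \<Rightarrow> bool" where
  "normal_mat M \<longleftrightarrow> M ** cadj M = cadj M ** M"

end

theory Submission
  imports Defs "HOL-Probability.Probability"
begin

typedef (overloaded) 'n op = "UNIV :: ((complex^'n::finite^'n) \<Rightarrow>\<^sub>L (complex^'n^'n)) set"
  morphisms opb Op by auto

setup_lifting type_definition_op

instantiation op :: (finite) real_normed_algebra_1
begin

lift_definition norm_op :: "'a op \<Rightarrow> real" is norm .
lift_definition minus_op :: "'a op \<Rightarrow> 'a op \<Rightarrow> 'a op" is "(-)" .
lift_definition plus_op :: "'a op \<Rightarrow> 'a op \<Rightarrow> 'a op" is "(+)" .
lift_definition uminus_op :: "'a op \<Rightarrow> 'a op" is uminus .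
lift_definition zero_op :: "'a op" is 0 .
lift_definition one_op :: "'a op" is id_blinfun .
lift_definition times_op :: "'a op \<Rightarrow> 'a op \<Rightarrow> 'a op" is blinfun_compose .
lift_definition scaleR_op :: "real \<Rightarrow> 'a op \<Rightarrow> 'a op" is scaleR .

definition dist_op :: "'a op \<Rightarrow> 'a op \<Rightarrow> real"
  where "dist_op a b = norm (a - b)"

definition [code del]:
  "(uniformity :: ('a op \<times> 'a op) filter) = (INF e\<in>{0 <..}. principal {(x, y). dist x y < e})"

definition open_op :: "'a op set \<Rightarrow> bool"
  where [code del]: "open_op S = (\<forall>x\<in>S. \<forall>\<^sub>F (x', y) in uniformity. x' = x \<longrightarrow> y \<in> S)"

definition sgn_op :: "'a op \<Rightarrow> 'a op"
  where "sgn_op x = scaleR (inverse (norm x)) x"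

lemma nontriv_V: "\<exists>x::complex^'a^'a. x \<noteq> 0"
proof
  show "(mat 1 :: complex^'a^'a) \<noteq> 0"
  proof
    assume "(mat 1 :: complex^'a^'a) = 0"
    then have "(mat 1 :: complex^'a^'a) $ undefined $ undefined = 0" by simp
    then show False by (simp add: mat_def)
  qed
qed

instance
proof
  fix x y z :: "'a op" and a b :: real
  show "dist x y = norm (x - y)" by (simp add: dist_op_def)
  show "sgn x = inverse (norm x) *\<^sub>R x" by (simp add: sgn_op_def)
  show "uniformity = (INF e\<in>{0 <..}. principal {(x, y::'a op). dist x y < e})" by (simp add: uniformity_op_def)
  show "open U = (\<forall>x\<in>U. \<forall>\<^sub>F (x', y) in uniformity. x' = x \<longrightarrow> y \<in> U)" for U :: "'a op set"
    by (simp add: open_op_def)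
  show "x + y + z = x + (y + z)" by transfer (simp add: algebra_simps)
  show "x + y = y + x" by transfer (simp add: algebra_simps)
  show "0 + x = x" by transfer simp
  show "- x + x = 0" by transfer simp
  show "x - y = x + - y" by transfer simp
  show "a *\<^sub>R (x + y) = a *\<^sub>R x + a *\<^sub>R y" by transfer (simp add: algebra_simps)
  show "(a + b) *\<^sub>R x = a *\<^sub>R x + b *\<^sub>R x" by transfer (simp add: algebra_simps)
  show "a *\<^sub>R b *\<^sub>R x = (a * b) *\<^sub>R x" by transfer simp
  show "1 *\<^sub>R x = x" by transfer simp
  show "(norm x = 0) = (x = 0)" by transfer simp
  show "norm (x + y) \<le> norm x + norm y" by transfer (rule norm_triangle_ineq)
  show "norm (a *\<^sub>R x) = \<bar>a\<bar> * norm x" by transfer simp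
  show "x * y * z = x * (y * z)" by transfer (rule blinfun_eqI, simp)
  show "(x + y) * z = x * z + y * z" by transfer (rule blinfun_eqI, simp add: blinfun.bilinear_simps)
  show "x * (y + z) = x * y + x * z" by transfer (rule blinfun_eqI, simp add: blinfun.bilinear_simps)
  show "a *\<^sub>R x * y = a *\<^sub>R (x * y)" by transfer (rule blinfun_eqI, simp add: blinfun.bilinear_simps)
  show "x * a *\<^sub>R y = a *\<^sub>R (x * y)" by transfer (rule blinfun_eqI, simp add: blinfun.bilinear_simps)
  show "1 * x = x" by transfer (rule blinfun_eqI, simp)
  show "x * 1 = x" by transfer (rule blinfun_eqI, simp)
  show "(0::'a op) \<noteq> 1"
  proof transfer
    obtain v :: "complex^'a^'a" where "v \<noteq> 0" using nontriv_V by blast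
    show "0 \<noteq> (id_blinfun :: (complex^'a^'a) \<Rightarrow>\<^sub>L _)"
    proof
      assume "0 = (id_blinfun :: (complex^'a^'a) \<Rightarrow>\<^sub>L _)"
      then have "blinfun_apply 0 v = blinfun_apply id_blinfun v" by simp
      with \<open>v \<noteq> 0\<close> show False by simp
    qed
  qed
  show "norm (1::'a op) = 1" by transfer (rule norm_blinfun_id)
  show "norm (x * y) \<le> norm x * norm y" by transfer (rule norm_blinfun_compose)
qed
end

lemma dist_opb: "dist (opb a) (opb b) = dist a b"
  by (simp add: dist_norm dist_op_def norm_op.rep_eq minus_op.rep_eq)

instance op :: (finite) banach
proof
  fix X :: "nat \<Rightarrow> 'a op"
  assume "Cauchy X"
  then have "Cauchy (\<lambda>n. opb (X n))"
    unfolding Cauchy_def by (simp add: dist_opb)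
  then obtain l where l: "(\<lambda>n. opb (X n)) \<longlonglongrightarrow> l"
    using Cauchy_convergent convergent_def by blast
  have "X \<longlonglongrightarrow> Op l"
    using l unfolding tendsto_iff by (simp add: dist_opb[symmetric] Op_inverse)
  then show "convergent X" by (auto simp: convergent_def)
qed

definition ap :: "'n::finite op \<Rightarrow> complex^'n^'n \<Rightarrow> complex^'n^'n" where
  "ap K = blinfun_apply (opb K)"

lemma ap_mult[simp]: "ap (K * L) Y = ap K (ap L Y)"
  by (simp add: ap_def times_op.rep_eq)
lemma ap_one[simp]: "ap 1 Y = Y"
  by (simp add: ap_def one_op.rep_eq)
lemma ap_add[simp]: "ap (K + L) Y = ap K Y + ap L Y"
  by (simp add: ap_def plus_op.rep_eq blinfun.add_left)
lemma ap_diff[simp]: "ap (K - L) Y = ap K Y - ap L Y"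
  by (simp add: ap_def minus_op.rep_eq blinfun.diff_left)
lemma ap_uminus[simp]: "ap (- K) Y = - ap K Y"
  by (simp add: ap_def uminus_op.rep_eq blinfun.minus_left)
lemma ap_zero[simp]: "ap 0 Y = 0"
  by (simp add: ap_def zero_op.rep_eq)
lemma ap_scaleR[simp]: "ap (r *\<^sub>R K) Y = r *\<^sub>R ap K Y"
  by (simp add: ap_def scaleR_op.rep_eq blinfun.scaleR_left)
lemma norm_ap: "norm (ap K Y) \<le> norm K * norm Y"
  by (simp add: ap_def norm_op.rep_eq norm_blinfun)
lemma bl_ap: "bounded_linear (ap K)"
  by (simp add: ap_def blinfun.bounded_linear_right)
lemma bl_ap_left: "bounded_linear (\<lambda>K. ap K Y)"
proof (rule bounded_linear_intro[of _ "norm Y"])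
  show "ap (K + L) Y = ap K Y + ap L Y" for K L by simp
  show "ap (r *\<^sub>R K) Y = r *\<^sub>R ap K Y" for r K by simp
  show "norm (ap K Y) \<le> norm K * norm Y" for K by (rule norm_ap)
qed
lemma ap_sum_right: "ap K (\<Sum>i\<in>A. f i) = (\<Sum>i\<in>A. ap K (f i))"
  by (simp add: ap_def blinfun.sum_right)
lemma ap_scaleR_right[simp]: "ap K (r *\<^sub>R Y) = r *\<^sub>R ap K Y"
  by (simp add: ap_def blinfun.scaleR_right)
lemma ap_add_right[simp]: "ap K (X + Y) = ap K X + ap K Y"
  by (simp add: ap_def blinfun.add_right)
lemma ap_diff_right[simp]: "ap K (X - Y) = ap K X - ap K Y"
  by (simp add: ap_def blinfun.diff_right)
lemma ap_minus_right[simp]: "ap K (- Y) = - ap K Y"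
  by (simp add: ap_def blinfun.minus_right)
lemma ap_zero_right[simp]: "ap K 0 = 0"
  by (simp add: ap_def)
lemma ap_eqI: "(\<And>Y. ap K Y = ap L Y) \<Longrightarrow> K = L"
  unfolding ap_def by (metis blinfun_eqI opb_inject)
lemma ap_power_Suc: "ap (K ^ Suc n) Y = ap K (ap (K ^ n) Y)"
  by simp

definition gm :: "nat \<Rightarrow> real" where
  "gm n = (if even n then fact n / (2 ^ (n div 2) * fact (n div 2)) else 0)"

lemma gauss_moment:
  "((\<lambda>w::real. exp (- w\<^sup>2 / 2) * w ^ n) has_integral (sqrt (2 * pi) * gm n)) UNIV"
proof -
  have "\<exists>v. has_bochner_integral lborel (\<lambda>x. std_normal_density x * x ^ n) v \<and> v = gm n"
  proof (cases "even n")
    case True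
    then obtain k where k: "n = 2 * k" by (auto elim: evenE)
    show ?thesis using std_normal_moment_even[of k] by (auto simp: k gm_def)
  next
    case False
    then obtain k where k: "n = 2 * k + 1" by (auto elim: oddE)
    show ?thesis using std_normal_moment_odd[of k] False by (auto simp: k gm_def)
  qed
  then obtain v where v: "has_bochner_integral lborel (\<lambda>x. std_normal_density x * x ^ n) v" "v = gm n"
    by blast
  have "((\<lambda>x. std_normal_density x * x ^ n) has_integral v) UNIV"
    using has_integral_integral_lborel[OF integrable.intros[OF v(1)]]
      has_bochner_integral_integral_eq[OF v(1)] by simp
  then have "((\<lambda>x. sqrt (2*pi) * (std_normal_density x * x ^ n)) has_integral (sqrt (2*pi) * v)) UNIV"
    by (rule has_integral_mult_right)
  moreover have "sqrt (2*pi) * (std_normal_density x * x ^ n) = exp (- x\<^sup>2 / 2) * x ^ n" for x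
    by (simp add: std_normal_density_def)
  ultimately show ?thesis using v(2) by simp
qed

lemma gauss_shift_integrable:
  "(\<lambda>w::real. exp (- w\<^sup>2 / 2) * exp (a * w)) integrable_on UNIV"
proof -
  have "(normal_density a 1) integrable_on UNIV"
    by (rule integrable_on_lborel) simp
  then have "(\<lambda>w. (sqrt (2*pi) * exp (a\<^sup>2/2)) * normal_density a 1 w) integrable_on UNIV"
    by (rule integrable_on_mult_right)
  moreover have "(sqrt (2*pi) * exp (a\<^sup>2/2)) * normal_density a 1 w = exp (- w\<^sup>2 / 2) * exp (a * w)" for w
  proof -
    have "exp (a\<^sup>2/2) * exp (-(w - a)\<^sup>2/2) = exp (- w\<^sup>2 / 2) * exp (a * w)"
    proof -
      have "a\<^sup>2/2 + (-(w - a)\<^sup>2/2) = - w\<^sup>2 / 2 + a * w"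
        by (simp add: power2_eq_square field_simps)
      then show ?thesis unfolding exp_add[symmetric] by simp
    qed
    then show ?thesis by (simp add: normal_density_def)
  qed
  ultimately show ?thesis by simp
qed

lemma exp_partial_le:
  fixes x :: real assumes "0 \<le> x"
  shows "(\<Sum>k<n. x ^ k / fact k) \<le> exp x"
proof -
  have "(\<Sum>k<n. x ^ k / fact k) \<le> (\<Sum>k. x ^ k / fact k)"
  proof (rule sum_le_suminf)
    show "summable (\<lambda>k. x ^ k / fact k)"
      using summable_exp[of x] by (simp add: divide_inverse_commute)
  qed (use assms in auto)
  also have "\<dots> = exp x" using exp_converges[of x] by (simp add: sums_iff divide_inverse mult.commute)
  finally show ?thesis .
qed

lemma exp_series_ap_full:
  fixes K :: "'n::finite op"
  shows "(\<lambda>m. \<Sum>k<m. (r ^ k / fact k) *\<^sub>R ap (K ^ k) Y) \<longlonglongrightarrow> ap (exp (r *\<^sub>R K)) Y"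
proof -
  have "(\<lambda>n. ap ((r *\<^sub>R K) ^ n /\<^sub>R fact n) Y) sums ap (exp (r *\<^sub>R K)) Y"
    by (rule bounded_linear.sums[OF bl_ap_left exp_converges])
  moreover have "(\<lambda>n. ap ((r *\<^sub>R K) ^ n /\<^sub>R fact n) Y) = (\<lambda>n. (r ^ n / fact n) *\<^sub>R ap (K ^ n) Y)"
    by (rule ext) (simp add: divide_inverse_commute)
  ultimately have "(\<lambda>n. (r ^ n / fact n) *\<^sub>R ap (K ^ n) Y) sums ap (exp (r *\<^sub>R K)) Y" by simp
  then have "(\<lambda>n. \<Sum>k<n. (r ^ k / fact k) *\<^sub>R ap (K ^ k) Y) \<longlonglongrightarrow> ap (exp (r *\<^sub>R K)) Y"
    by (simp add: sums_def)
  then show ?thesis .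
qed

lemma exp_series_ap:
  fixes K :: "'n::finite op"
  shows "(\<lambda>m. \<Sum>k<2*m. (r ^ k / fact k) *\<^sub>R ap (K ^ k) Y) \<longlonglongrightarrow> ap (exp (r *\<^sub>R K)) Y"
  using LIMSEQ_subseq_LIMSEQ[OF exp_series_ap_full, of "\<lambda>m. 2*m"]
  by (simp add: strict_mono_def o_def)

lemma gauss_gen:
  fixes K :: "'n::finite op" and Y :: "complex^'n^'n" and s :: real and j :: nat
  assumes j: "j \<le> 1"
  assumes L: "(\<lambda>m. \<Sum>k<2*m. (sqrt (2*pi) * gm (k+j)) *\<^sub>R ((s^k / fact k) *\<^sub>R ap (K^k) Y)) \<longlonglongrightarrow> L"
  shows "((\<lambda>w. (w^j * exp (- w\<^sup>2 / 2)) *\<^sub>R ap (exp ((w * s) *\<^sub>R K)) Y) has_integral L) UNIV"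
proof -
  define a where "a = \<bar>s\<bar> * norm K + 1"
  have a0: "0 \<le> a" unfolding a_def by simp
  define f where "f m w = (w^j * exp (- w\<^sup>2 / 2)) *\<^sub>R (\<Sum>k<2*m. ((w * s)^k / fact k) *\<^sub>R ap (K^k) Y)" for m w
  define h where "h w = norm Y * (exp (- w\<^sup>2 / 2) * exp (a * w) + exp (- w\<^sup>2 / 2) * exp (-a * w))" for w
  show ?thesis
  proof (rule has_integral_dominated_convergence[where f=f and h=h])
    fix m
    have "((\<lambda>w. \<Sum>k<2*m. (exp (- w\<^sup>2 / 2) * w ^ (k+j)) *\<^sub>R ((s^k / fact k) *\<^sub>R ap (K^k) Y))
          has_integral (\<Sum>k<2*m. (sqrt (2*pi) * gm (k+j)) *\<^sub>R ((s^k / fact k) *\<^sub>R ap (K^k) Y))) UNIV"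
      by (intro has_integral_sum finite_lessThan has_integral_scaleR_left gauss_moment)
    moreover have "(\<lambda>w. \<Sum>k<2*m. (exp (- w\<^sup>2 / 2) * w ^ (k+j)) *\<^sub>R ((s^k / fact k) *\<^sub>R ap (K^k) Y)) = f m"
      unfolding f_def by (auto simp: fun_eq_iff scaleR_sum_right power_mult_distrib power_add intro!: sum.cong)
    ultimately show "(f m has_integral (\<Sum>k<2*m. (sqrt (2*pi) * gm (k+j)) *\<^sub>R ((s^k / fact k) *\<^sub>R ap (K^k) Y))) UNIV"
      by simp
  next
    show "h integrable_on UNIV"
      unfolding h_def
      by (intro integrable_on_mult_right integrable_add gauss_shift_integrable)
  next
    fix m
    show "\<forall>w\<in>UNIV. norm (f m w) \<le> h w"
    proof
      fix w :: real
      define x where "x = \<bar>w\<bar> * \<bar>s\<bar> * norm K"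
      have x0: "0 \<le> x" unfolding x_def by simp
      have "norm (\<Sum>k<2*m. ((w * s)^k / fact k) *\<^sub>R ap (K^k) Y) \<le> (\<Sum>k<2*m. norm (((w * s)^k / fact k) *\<^sub>R ap (K^k) Y))"
        by (rule norm_sum)
      also have "\<dots> \<le> (\<Sum>k<2*m. (x ^ k / fact k) * norm Y)"
      proof (rule sum_mono)
        fix k
        have "norm (ap (K^k) Y) \<le> norm (K^k) * norm Y" by (rule norm_ap)
        also have "\<dots> \<le> norm K ^ k * norm Y" by (intro mult_right_mono norm_power_ineq) auto
        finally have "norm (ap (K^k) Y) \<le> norm K ^ k * norm Y" .
        then have "\<bar>(w * s)^k / fact k\<bar> * norm (ap (K^k) Y) \<le> \<bar>(w * s)^k / fact k\<bar> * (norm K ^ k * norm Y)"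
          by (intro mult_left_mono) auto
        also have "\<dots> = (x ^ k / fact k) * norm Y"
          by (simp add: x_def power_abs abs_mult power_mult_distrib)
        finally show "norm (((w * s)^k / fact k) *\<^sub>R ap (K^k) Y) \<le> (x ^ k / fact k) * norm Y" by simp
      qed
      also have "\<dots> = (\<Sum>k<2*m. x ^ k / fact k) * norm Y" by (simp add: sum_distrib_right)
      also have "\<dots> \<le> exp x * norm Y" by (intro mult_right_mono exp_partial_le x0) auto
      finally have S: "norm (\<Sum>k<2*m. ((w * s)^k / fact k) *\<^sub>R ap (K^k) Y) \<le> exp x * norm Y" .
      have wj: "\<bar>w\<bar> ^ j \<le> exp \<bar>w\<bar>"
      proof (cases "j = 0")
        case True then show ?thesis by simp
      next
        case False then have "j = 1" using j by simp
        moreover have "\<bar>w\<bar> \<le> exp \<bar>w\<bar>" using exp_ge_add_one_self[of "\<bar>w\<bar>"] by linarith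
        ultimately show ?thesis by simp
      qed
      have ea: "exp (a * \<bar>w\<bar>) \<le> exp (a * w) + exp (-a * w)"
        by (cases "w \<ge> 0") (auto simp: add_increasing add_increasing2)
      have "norm (f m w) = \<bar>w\<bar>^j * exp (- w\<^sup>2 / 2) * norm (\<Sum>k<2*m. ((w * s)^k / fact k) *\<^sub>R ap (K^k) Y)"
        unfolding f_def by (simp add: abs_mult power_abs)
      also have "\<dots> \<le> exp \<bar>w\<bar> * exp (- w\<^sup>2 / 2) * (exp x * norm Y)"
        by (intro mult_mono wj S) auto
      also have "\<dots> = norm Y * (exp (- w\<^sup>2 / 2) * exp (a * \<bar>w\<bar>))"
        by (simp add: a_def x_def exp_add[symmetric] algebra_simps)
      also have "\<dots> \<le> h w"
        unfolding h_def by (intro mult_left_mono) (use ea in \<open>auto simp: distrib_left[symmetric]\<close>)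
      finally show "norm (f m w) \<le> h w" .
    qed
  next
    show "\<forall>w\<in>UNIV. (\<lambda>m. f m w) \<longlonglongrightarrow> (w^j * exp (- w\<^sup>2 / 2)) *\<^sub>R ap (exp ((w * s) *\<^sub>R K)) Y"
      unfolding f_def by (intro ballI tendsto_scaleR tendsto_const) (rule exp_series_ap)
  next
    show "(\<lambda>m. \<Sum>k<2*m. (sqrt (2*pi) * gm (k+j)) *\<^sub>R ((s^k / fact k) *\<^sub>R ap (K^k) Y)) \<longlonglongrightarrow> L"
      by (rule L)
  qed
qed

lemma frac_cancel: "(x::real) \<noteq> 0 \<Longrightarrow> (2 * x * a) / (2 * b * (x * c)) = a / (b * c)"
  by (cases "b * c = 0") (auto simp: field_simps)

lemma sum_pairs:
  fixes g :: "nat \<Rightarrow> 'a::comm_monoid_add" and m :: nat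
  shows "(\<Sum>k<2*m. g k) = (\<Sum>i<m. g (2*i) + g (2*i+1))"
  by (induction m) (simp_all add: algebra_simps)

lemma gauss0:
  fixes K :: "'n::finite op" and Y :: "complex^'n^'n" and s :: real
  shows "((\<lambda>w. exp (- w\<^sup>2 / 2) *\<^sub>R ap (exp ((w * s) *\<^sub>R K)) Y) has_integral
           (sqrt (2*pi) *\<^sub>R ap (exp ((s\<^sup>2/2) *\<^sub>R (K*K))) Y)) UNIV"
proof -
  have "((\<lambda>w. (w^0 * exp (- w\<^sup>2 / 2)) *\<^sub>R ap (exp ((w * s) *\<^sub>R K)) Y) has_integral
           (sqrt (2*pi) *\<^sub>R ap (exp ((s\<^sup>2/2) *\<^sub>R (K*K))) Y)) UNIV"
  proof (rule gauss_gen)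
    have eq: "(\<Sum>k<2*m. (sqrt (2*pi) * gm (k+0)) *\<^sub>R ((s^k / fact k) *\<^sub>R ap (K^k) Y))
        = sqrt (2*pi) *\<^sub>R (\<Sum>i<m. (((s\<^sup>2/2) ^ i / fact i) *\<^sub>R ap ((K*K)^i) Y))" for m
    proof -
      have "(\<Sum>k<2*m. (sqrt (2*pi) * gm (k+0)) *\<^sub>R ((s^k / fact k) *\<^sub>R ap (K^k) Y))
          = (\<Sum>i<m. sqrt (2*pi) *\<^sub>R (((s\<^sup>2/2) ^ i / fact i) *\<^sub>R ap ((K*K)^i) Y))"
        unfolding sum_pairs
      proof (rule sum.cong[OF refl])
        fix i
        have g1: "gm (2*i+1+0) = 0" by (simp add: gm_def)
        have g0: "gm (2*i+0) * (s^(2*i) / fact (2*i)) = (s\<^sup>2/2)^i / fact i"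
          by (simp add: gm_def power_mult power_divide)
        have KK: "K^(2*i) = (K*K)^i" by (simp add: power_mult power2_eq_square)
        show "(sqrt (2*pi) * gm (2*i+0)) *\<^sub>R ((s^(2*i) / fact (2*i)) *\<^sub>R ap (K^(2*i)) Y)
            + (sqrt (2*pi) * gm (2*i+1+0)) *\<^sub>R ((s^(2*i+1) / fact (2*i+1)) *\<^sub>R ap (K^(2*i+1)) Y)
            = sqrt (2*pi) *\<^sub>R (((s\<^sup>2/2) ^ i / fact i) *\<^sub>R ap ((K*K)^i) Y)"
          unfolding g1 KK
        proof -
          have "(sqrt (2*pi) * gm (2*i+0)) *\<^sub>R ((s^(2*i) / fact (2*i)) *\<^sub>R ap ((K*K)^i) Y)
              = (sqrt (2*pi) * (gm (2*i+0) * (s^(2*i) / fact (2*i)))) *\<^sub>R ap ((K*K)^i) Y"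
            by (simp only: scaleR_scaleR mult.assoc)
          also have "\<dots> = sqrt (2*pi) *\<^sub>R (((s\<^sup>2/2) ^ i / fact i) *\<^sub>R ap ((K*K)^i) Y)"
            unfolding g0 by simp
          finally show "(sqrt (2*pi) * gm (2*i+0)) *\<^sub>R ((s^(2*i) / fact (2*i)) *\<^sub>R ap ((K*K)^i) Y)
            + (sqrt (2*pi) * 0) *\<^sub>R ((s^(2*i+1) / fact (2*i+1)) *\<^sub>R ap (K^(2*i+1)) Y)
            = sqrt (2*pi) *\<^sub>R (((s\<^sup>2/2) ^ i / fact i) *\<^sub>R ap ((K*K)^i) Y)" by simp
        qed
      qed
      also have "\<dots> = sqrt (2*pi) *\<^sub>R (\<Sum>i<m. (((s\<^sup>2/2) ^ i / fact i) *\<^sub>R ap ((K*K)^i) Y))"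
        by (simp add: scaleR_sum_right)
      finally show ?thesis .
    qed
    show "(\<lambda>m. \<Sum>k<2*m. (sqrt (2*pi) * gm (k+0)) *\<^sub>R ((s^k / fact k) *\<^sub>R ap (K^k) Y))
        \<longlonglongrightarrow> sqrt (2*pi) *\<^sub>R ap (exp ((s\<^sup>2/2) *\<^sub>R (K*K))) Y"
      unfolding eq by (intro tendsto_scaleR tendsto_const exp_series_ap_full)
  qed simp
  then show ?thesis by simp
qed

lemma gauss1:
  fixes K :: "'n::finite op" and Y :: "complex^'n^'n" and s :: real
  shows "((\<lambda>w. (w * exp (- w\<^sup>2 / 2)) *\<^sub>R ap (exp ((w * s) *\<^sub>R K)) Y) has_integral
           (sqrt (2*pi) *\<^sub>R (s *\<^sub>R ap K (ap (exp ((s\<^sup>2/2) *\<^sub>R (K*K))) Y)))) UNIV"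
proof -
  have "((\<lambda>w. (w^1 * exp (- w\<^sup>2 / 2)) *\<^sub>R ap (exp ((w * s) *\<^sub>R K)) Y) has_integral
           (sqrt (2*pi) *\<^sub>R (s *\<^sub>R ap K (ap (exp ((s\<^sup>2/2) *\<^sub>R (K*K))) Y)))) UNIV"
  proof (rule gauss_gen)
    have eq: "(\<Sum>k<2*m. (sqrt (2*pi) * gm (k+1)) *\<^sub>R ((s^k / fact k) *\<^sub>R ap (K^k) Y))
        = sqrt (2*pi) *\<^sub>R (s *\<^sub>R ap K (\<Sum>i<m. (((s\<^sup>2/2) ^ i / fact i) *\<^sub>R ap ((K*K)^i) Y)))" for m
    proof -
      have "(\<Sum>k<2*m. (sqrt (2*pi) * gm (k+1)) *\<^sub>R ((s^k / fact k) *\<^sub>R ap (K^k) Y))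
          = (\<Sum>i<m. sqrt (2*pi) *\<^sub>R (s *\<^sub>R ap K (((s\<^sup>2/2) ^ i / fact i) *\<^sub>R ap ((K*K)^i) Y)))"
        unfolding sum_pairs
      proof (rule sum.cong[OF refl])
        fix i
        have g1: "gm (2*i+1) = 0" by (simp add: gm_def)
        have g0: "gm (2*i+1+1) * (s^(2*i+1) / fact (2*i+1)) = s * ((s\<^sup>2/2)^i / fact i)"
        proof -
          have e: "2*i+1+1 = 2*(i+1)" by simp
          have "gm (2*i+1+1) = fact (2*i+2) / (2^(i+1) * fact (i+1))"
            unfolding e by (simp add: gm_def)
          also have "\<dots> = (2 * (real i + 1) * fact (2*i+1)) / (2 * 2^i * ((real i + 1) * fact i))"
          proof -
            have f1: "(fact (2*i+2)::real) = 2*(real i+1) * fact (2*i+1)"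
            proof -
              have "(fact (Suc (2*i+1))::real) = of_nat (Suc (2*i+1)) * fact (2*i+1)" by (rule fact_Suc)
              then show ?thesis by (simp add: algebra_simps)
            qed
            have f2: "(fact (i+1)::real) = (real i+1) * fact i"
            proof -
              have "(fact (Suc i)::real) = of_nat (Suc i) * fact i" by (rule fact_Suc)
              then show ?thesis by (simp add: algebra_simps)
            qed
            show ?thesis unfolding f1 f2 by simp
          qed
          also have "\<dots> = fact (2*i+1) / (2^i * fact i)"
            by (rule frac_cancel) simp
          finally have gmv: "gm (2*i+1+1) = fact (2*i+1) / (2^i * fact i)" .
          have F: "(fact (2*i+1) :: real) \<noteq> 0" by simp
          have "gm (2*i+1+1) * (s^(2*i+1) / fact (2*i+1)) = s^(2*i+1) / (2^i * fact i)"
            unfolding gmv using F by simp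
          also have "\<dots> = s * ((s\<^sup>2/2)^i / fact i)"
            by (simp add: power_divide power_mult[symmetric])
          finally show ?thesis .
        qed
        have KK: "K^(2*i+1) = K * (K*K)^i" by (simp add: power_mult power2_eq_square)
        show "(sqrt (2*pi) * gm (2*i+1)) *\<^sub>R ((s^(2*i) / fact (2*i)) *\<^sub>R ap (K^(2*i)) Y)
            + (sqrt (2*pi) * gm (2*i+1+1)) *\<^sub>R ((s^(2*i+1) / fact (2*i+1)) *\<^sub>R ap (K^(2*i+1)) Y)
            = sqrt (2*pi) *\<^sub>R (s *\<^sub>R ap K (((s\<^sup>2/2) ^ i / fact i) *\<^sub>R ap ((K*K)^i) Y))"
          unfolding g1 KK
        proof -
          have "(sqrt (2*pi) * gm (2*i+1+1)) *\<^sub>R ((s^(2*i+1) / fact (2*i+1)) *\<^sub>R ap (K * (K*K)^i) Y)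
              = (sqrt (2*pi) * (gm (2*i+1+1) * (s^(2*i+1) / fact (2*i+1)))) *\<^sub>R ap K (ap ((K*K)^i) Y)"
            by (simp add: mult.assoc)
          also have "\<dots> = sqrt (2*pi) *\<^sub>R (s *\<^sub>R ap K (((s\<^sup>2/2) ^ i / fact i) *\<^sub>R ap ((K*K)^i) Y))"
            unfolding g0 by (simp add: mult.assoc)
          finally show "(sqrt (2*pi) * 0) *\<^sub>R ((s^(2*i) / fact (2*i)) *\<^sub>R ap (K^(2*i)) Y)
            + (sqrt (2*pi) * gm (2*i+1+1)) *\<^sub>R ((s^(2*i+1) / fact (2*i+1)) *\<^sub>R ap (K * (K*K)^i) Y)
            = sqrt (2*pi) *\<^sub>R (s *\<^sub>R ap K (((s\<^sup>2/2) ^ i / fact i) *\<^sub>R ap ((K*K)^i) Y))" by simp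
        qed
      qed
      also have "\<dots> = sqrt (2*pi) *\<^sub>R (s *\<^sub>R ap K (\<Sum>i<m. (((s\<^sup>2/2) ^ i / fact i) *\<^sub>R ap ((K*K)^i) Y)))"
        by (simp add: scaleR_sum_right ap_sum_right)
      finally show ?thesis .
    qed
    have "(\<lambda>m. ap K (\<Sum>i<m. (((s\<^sup>2/2) ^ i / fact i) *\<^sub>R ap ((K*K)^i) Y)))
        \<longlonglongrightarrow> ap K (ap (exp ((s\<^sup>2/2) *\<^sub>R (K*K))) Y)"
      by (rule bounded_linear.tendsto[OF bl_ap exp_series_ap_full])
    then show "(\<lambda>m. \<Sum>k<2*m. (sqrt (2*pi) * gm (k+1)) *\<^sub>R ((s^k / fact k) *\<^sub>R ap (K^k) Y))
        \<longlonglongrightarrow> sqrt (2*pi) *\<^sub>R (s *\<^sub>R ap K (ap (exp ((s\<^sup>2/2) *\<^sub>R (K*K))) Y))"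
      unfolding eq by (intro tendsto_scaleR tendsto_const)
  qed simp
  then show ?thesis by simp
qed

lemma exp_gauss_tendsto: assumes "0 < c" shows "((\<lambda>t::real. exp (- (c * t\<^sup>2))) \<longlongrightarrow> 0) at_top"
proof -
  have "LIM t at_top. c * t\<^sup>2 :> at_top"
    by (rule filterlim_tendsto_pos_mult_at_top[OF tendsto_const assms filterlim_pow_at_top[OF _ filterlim_ident]]) simp
  then have "LIM t at_top. - (c * t\<^sup>2) :> at_bot"
    by (simp add: filterlim_uminus_at_top)
  then show ?thesis by (rule filterlim_compose[OF exp_at_bot])
qed

lemma ap_exp_deriv:
  fixes Q :: "'n::finite op"
  shows "((\<lambda>s. ap (exp (s *\<^sub>R Q)) y) has_vector_derivative ap Q (ap (exp (s *\<^sub>R Q)) y)) (at s within S)"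
proof -
  have "((\<lambda>s. ap (exp (s *\<^sub>R Q)) y) has_vector_derivative ap (Q * exp (s *\<^sub>R Q)) y) (at s within S)"
    by (rule bounded_linear.has_vector_derivative[OF bl_ap_left
          has_vector_derivative_at_within[OF exp_scaleR_has_vector_derivative_left]])
  then show ?thesis by simp
qed

lemma decay:
  fixes Q :: "'n::finite op"
  assumes pos: "\<And>y. lm * (norm y)\<^sup>2 \<le> inner (ap Q y) y" and s0: "0 \<le> s"
  shows "norm (ap (exp (s *\<^sub>R (-Q))) y) \<le> exp (- lm * s) * norm y"
proof -
  define z where "z s = ap (exp (s *\<^sub>R (-Q))) y" for s
  have dz: "(z has_vector_derivative (- ap Q (z s))) (at s)" for s
    using ap_exp_deriv[of "-Q" y s UNIV] unfolding z_def by simp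
  define \<psi> where "\<psi> s = exp (2 * lm * s) * (z s \<bullet> z s)" for s
  have d\<psi>: "DERIV \<psi> s :> exp (2 * lm * s) * (2 * lm) * (z s \<bullet> z s) + exp (2 * lm * s) * (2 * ((- ap Q (z s)) \<bullet> z s))" for s
  proof -
    have "((\<lambda>s. z s \<bullet> z s) has_derivative (\<lambda>h. z s \<bullet> (h *\<^sub>R (- ap Q (z s))) + (h *\<^sub>R (- ap Q (z s))) \<bullet> z s)) (at s)"
      using dz[of s] unfolding has_vector_derivative_def by (intro has_derivative_inner) auto
    moreover have "(\<lambda>h. z s \<bullet> (h *\<^sub>R (- ap Q (z s))) + (h *\<^sub>R (- ap Q (z s))) \<bullet> z s) = (*) (2 * ((- ap Q (z s)) \<bullet> z s))"
      by (auto simp: fun_eq_iff inner_commute algebra_simps)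
    ultimately have "DERIV (\<lambda>s. z s \<bullet> z s) s :> 2 * ((- ap Q (z s)) \<bullet> z s)"
      unfolding has_field_derivative_def by (rule has_derivative_eq_rhs)
    then show ?thesis unfolding \<psi>_def
      by (auto intro!: derivative_eq_intros)
  qed
  have "\<psi> s \<le> \<psi> 0"
  proof (rule DERIV_nonpos_imp_nonincreasing[OF s0])
    fix x assume "0 \<le> x" "x \<le> s"
    have "lm * (z x \<bullet> z x) \<le> ap Q (z x) \<bullet> z x"
      using pos[of "z x"] by (simp add: power2_norm_eq_inner)
    then have "exp (2 * lm * x) * (2 * lm) * (z x \<bullet> z x) + exp (2 * lm * x) * (2 * ((- ap Q (z x)) \<bullet> z x)) \<le> 0"
      by (simp add: algebra_simps mult_left_mono flip: distrib_left)
    then show "\<exists>y. DERIV \<psi> x :> y \<and> y \<le> 0" using d\<psi> by blast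
  qed
  then have "exp (2 * lm * s) * (norm (z s))\<^sup>2 \<le> (norm y)\<^sup>2"
    by (simp add: \<psi>_def z_def power2_norm_eq_inner)
  then have "(norm (z s))\<^sup>2 \<le> exp (- 2 * lm * s) * (norm y)\<^sup>2"
    by (simp add: exp_minus field_simps mult.commute)
  also have "\<dots> = (exp (- lm * s) * norm y)\<^sup>2"
    by (simp add: power_mult_distrib exp_double[symmetric] power2_eq_square exp_add[symmetric])
  finally have "(norm (z s))\<^sup>2 \<le> (exp (- lm * s) * norm y)\<^sup>2" .
  then show ?thesis unfolding z_def
    by (rule power2_le_imp_le) simp
qed

lemma improper_nonneg:
  fixes g \<Phi> :: "real \<Rightarrow> real"
  assumes d: "\<And>t. 0 \<le> t \<Longrightarrow> (\<Phi> has_vector_derivative g t) (at t)"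
    and nn: "\<And>t. 0 \<le> t \<Longrightarrow> 0 \<le> g t"
    and lim: "(\<Phi> \<longlongrightarrow> L) at_top"
  shows "(g has_integral (L - \<Phi> 0)) {0..}"
proof -
  define f where "f k t = (if t \<in> {0..real k} then g t else 0)" for k t
  have ftc: "(g has_integral (\<Phi> (real k) - \<Phi> 0)) {0..real k}" for k
    by (rule fundamental_theorem_of_calculus) (auto intro: has_vector_derivative_at_within d)
  have fk: "(f k has_integral (\<Phi> (real k) - \<Phi> 0)) {0..}" for k
    unfolding f_def has_integral_restrict_Int using ftc[of k] by (simp add: Int_absorb2 Int_commute)
  have limk: "(\<lambda>k. \<Phi> (real k) - \<Phi> 0) \<longlonglongrightarrow> L - \<Phi> 0"
    by (intro tendsto_diff tendsto_const filterlim_compose[OF lim filterlim_real_sequentially])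
  have conv: "(\<lambda>k. f k t) \<longlonglongrightarrow> g t" if "t \<in> {0..}" for t
  proof (rule tendsto_eventually)
    obtain N :: nat where "t \<le> real N" using real_arch_simple by blast
    then show "\<forall>\<^sub>F k in sequentially. f k t = g t"
      using that by (auto simp: f_def eventually_sequentially intro!: exI[of _ N])
  qed
  have eq: "(\<lambda>k. integral {0..} (f k)) = (\<lambda>k. \<Phi> (real k) - \<Phi> 0)"
    by (intro ext integral_unique fk)
  have mc: "g integrable_on {0..} \<and> (\<lambda>k. integral {0..} (f k)) \<longlonglongrightarrow> integral {0..} g"
  proof (rule monotone_convergence_increasing)
    show "f k integrable_on {0..}" for k using fk by blast
    show "f k t \<le> f (Suc k) t" if "t \<in> {0..}" for k t using that nn by (auto simp: f_def)
    show "(\<lambda>k. f k t) \<longlonglongrightarrow> g t" if "t \<in> {0..}" for t using conv that by blast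
    show "bounded (range (\<lambda>k. integral {0..} (f k)))"
      unfolding eq by (rule convergent_imp_bounded[OF limk])
  qed
  have "integral {0..} g = L - \<Phi> 0"
    using LIMSEQ_unique[OF conjunct2[OF mc]] limk unfolding eq by blast
  then show ?thesis using mc by (metis has_integral_integral)
qed

lemma improper_dom:
  fixes g \<Phi> :: "real \<Rightarrow> 'a::euclidean_space" and h :: "real \<Rightarrow> real"
  assumes d: "\<And>t. 0 \<le> t \<Longrightarrow> (\<Phi> has_vector_derivative g t) (at t)"
    and h: "h integrable_on {0..}" and le: "\<And>t. 0 \<le> t \<Longrightarrow> norm (g t) \<le> h t"
    and lim: "(\<Phi> \<longlongrightarrow> L) at_top"
  shows "(g has_integral (L - \<Phi> 0)) {0..}"
proof -
  define f where "f k t = (if t \<in> {0..real k} then g t else 0)" for k t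
  have ftc: "(g has_integral (\<Phi> (real k) - \<Phi> 0)) {0..real k}" for k
    by (rule fundamental_theorem_of_calculus) (auto intro: has_vector_derivative_at_within d)
  have fk: "(f k has_integral (\<Phi> (real k) - \<Phi> 0)) {0..}" for k
    unfolding f_def has_integral_restrict_Int using ftc[of k] by (simp add: Int_absorb2 Int_commute)
  have limk: "(\<lambda>k. \<Phi> (real k) - \<Phi> 0) \<longlonglongrightarrow> L - \<Phi> 0"
    by (intro tendsto_diff tendsto_const filterlim_compose[OF lim filterlim_real_sequentially])
  show ?thesis
  proof (rule has_integral_dominated_convergence[OF fk h _ _ limk])
    show "\<forall>t\<in>{0..}. norm (f k t) \<le> h t" for k
      using le by (auto simp: f_def intro: order_trans[OF norm_ge_zero])
    show "\<forall>t\<in>{0..}. (\<lambda>k. f k t) \<longlonglongrightarrow> g t"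
    proof
      fix t :: real assume t: "t \<in> {0..}"
      show "(\<lambda>k. f k t) \<longlonglongrightarrow> g t"
      proof (rule tendsto_eventually)
        obtain N :: nat where "t \<le> real N" using real_arch_simple by blast
        then show "\<forall>\<^sub>F k in sequentially. f k t = g t"
          using t by (auto simp: f_def eventually_sequentially intro!: exI[of _ N])
      qed
    qed
  qed
qed

lemma exp_commute:
  fixes A B :: "'a::{real_normed_algebra_1,banach}"
  assumes AB: "A * B = B * A"
  shows "A * exp B = exp B * A"
proof -
  have pc: "A * B ^ n = B ^ n * A" for n
  proof (induction n)
    case (Suc n)
    have "A * B ^ Suc n = (A * B) * B ^ n" by (simp add: mult.assoc)
    also have "\<dots> = B * (A * B ^ n)" by (simp add: AB mult.assoc)
    also have "\<dots> = B ^ Suc n * A" by (simp add: Suc mult.assoc)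
    finally show ?case .
  qed simp
  have "A * exp B = (\<Sum>n. A * (B ^ n /\<^sub>R fact n))"
    unfolding exp_def by (rule suminf_mult[symmetric, OF summable_exp_generic])
  also have "\<dots> = (\<Sum>n. (B ^ n /\<^sub>R fact n) * A)"
    by (simp add: pc)
  also have "\<dots> = exp B * A"
    unfolding exp_def by (rule suminf_mult2[symmetric, OF summable_exp_generic])
  finally show ?thesis .
qed

lemma t_integral:
  fixes Q :: "'n::finite op"
  assumes pos: "\<And>y. lm * (norm y)\<^sup>2 \<le> inner (ap Q y) y" and lm: "0 < lm"
  shows "((\<lambda>t. t *\<^sub>R ap (exp ((t\<^sup>2/2) *\<^sub>R (-Q))) (ap Q X0)) has_integral X0) {0..}"
proof -
  define E where "E t = exp ((t\<^sup>2/2) *\<^sub>R (-Q))" for t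
  define c where "c = norm (ap Q X0)"
  have QE: "ap Q (ap (E t) y) = ap (E t) (ap Q y)" for t y
  proof -
    have "Q * E t = E t * Q" unfolding E_def by (rule exp_commute) (simp add: algebra_simps)
    then show ?thesis by (metis ap_mult)
  qed
  have dec: "norm (ap (E t) y) \<le> exp (- (lm/2 * t\<^sup>2)) * norm y" for t y
    using decay[OF pos, of "t\<^sup>2/2" y] unfolding E_def by (simp add: algebra_simps)
  define \<Phi> where "\<Phi> t = - ap (E t) X0" for t
  have d\<Phi>: "(\<Phi> has_vector_derivative t *\<^sub>R ap (E t) (ap Q X0)) (at t)" for t
  proof -
    have du: "((\<lambda>t::real. t\<^sup>2/2) has_vector_derivative t) (at t)"
      unfolding has_real_derivative_iff_has_vector_derivative[symmetric]
      by (auto intro!: derivative_eq_intros)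
    have "(((\<lambda>s. ap (exp (s *\<^sub>R (-Q))) X0) \<circ> (\<lambda>t. t\<^sup>2/2)) has_vector_derivative
        t *\<^sub>R ap (-Q) (ap (exp ((t\<^sup>2/2) *\<^sub>R (-Q))) X0)) (at t)"
      by (rule vector_diff_chain_at[OF du ap_exp_deriv])
    then have "((\<lambda>t. - ap (E t) X0) has_vector_derivative - (t *\<^sub>R ap (-Q) (ap (E t) X0))) (at t)"
      unfolding E_def o_def by (rule has_vector_derivative_minus)
    then show ?thesis unfolding \<Phi>_def using QE by simp
  qed
  have h: "(\<lambda>t. t * exp (- (lm/2 * t\<^sup>2)) * c) integrable_on {0..}"
  proof -
    have "((\<lambda>t. t * exp (- (lm/2 * t\<^sup>2)) * c) has_integral (0 - (- (c / lm) * exp (- (lm/2 * 0\<^sup>2))))) {0..}"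
    proof (rule improper_nonneg)
      fix t :: real
      show "((\<lambda>t. - (c / lm) * exp (- (lm/2 * t\<^sup>2))) has_vector_derivative t * exp (- (lm/2 * t\<^sup>2)) * c) (at t)"
        unfolding has_real_derivative_iff_has_vector_derivative[symmetric]
        using lm by (auto intro!: derivative_eq_intros simp: field_simps power2_eq_square)
      show "0 \<le> t \<Longrightarrow> 0 \<le> t * exp (- (lm/2 * t\<^sup>2)) * c" by (simp add: c_def)
      have "((\<lambda>t. - (c / lm) * exp (- (lm/2 * t\<^sup>2))) \<longlongrightarrow> - (c / lm) * 0) at_top"
        by (intro tendsto_mult tendsto_const exp_gauss_tendsto) (use lm in simp)
      then show "((\<lambda>t. - (c / lm) * exp (- (lm/2 * t\<^sup>2))) \<longlongrightarrow> 0) at_top" by simp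
    qed
    then show ?thesis by blast
  qed
  have "((\<lambda>t. t *\<^sub>R ap (E t) (ap Q X0)) has_integral (0 - \<Phi> 0)) {0..}"
  proof (rule improper_dom[OF _ h])
    show "(\<Phi> has_vector_derivative t *\<^sub>R ap (E t) (ap Q X0)) (at t)" for t by (rule d\<Phi>)
    fix t :: real assume t: "0 \<le> t"
    have "norm (t *\<^sub>R ap (E t) (ap Q X0)) = t * norm (ap (E t) (ap Q X0))" using t by simp
    also have "\<dots> \<le> t * (exp (- (lm/2 * t\<^sup>2)) * c)"
      unfolding c_def by (intro mult_left_mono dec t)
    finally show "norm (t *\<^sub>R ap (E t) (ap Q X0)) \<le> t * exp (- (lm/2 * t\<^sup>2)) * c" by (simp add: mult.assoc)
  next
    show "(\<Phi> \<longlongrightarrow> 0) at_top"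
    proof (rule Lim_null_comparison)
      show "\<forall>\<^sub>F t in at_top. norm (\<Phi> t) \<le> exp (- (lm/2 * t\<^sup>2)) * norm X0"
        unfolding \<Phi>_def using dec by simp
      have "((\<lambda>t. exp (- (lm/2 * t\<^sup>2)) * norm X0) \<longlongrightarrow> 0 * norm X0) at_top"
        by (intro tendsto_mult tendsto_const exp_gauss_tendsto) (use lm in simp)
      then show "((\<lambda>t. exp (- (lm/2 * t\<^sup>2)) * norm X0) \<longlongrightarrow> 0) at_top" by simp
    qed
  qed
  then show ?thesis unfolding E_def \<Phi>_def by simp
qed

type_synonym 'n mt = "complex^'n^'n"

lemma csc_add: "csc c (X + Y) = csc c X + csc c Y"
  by (simp add: csc_def vec_eq_iff distrib_left)
lemma csc_diff: "csc c (X - Y) = csc c X - csc c Y"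
  by (simp add: csc_def vec_eq_iff right_diff_distrib)
lemma csc_csc: "csc c (csc d X) = csc (c * d) X"
  by (simp add: csc_def vec_eq_iff mult.assoc)
lemma csc_one[simp]: "csc 1 X = X"
  by (simp add: csc_def vec_eq_iff)
lemma csc_zero[simp]: "csc 0 X = 0"
  by (simp add: csc_def vec_eq_iff)
lemma csc_add_left: "csc (c + d) X = csc c X + csc d X"
  by (simp add: csc_def vec_eq_iff distrib_right)
lemma csc_minus_left: "csc (- c) X = - csc c X"
  by (simp add: csc_def vec_eq_iff)
lemma scaleR_csc: "r *\<^sub>R X = csc (complex_of_real r) X"
  unfolding csc_def by (simp add: vec_eq_iff complex_eq_iff)
lemma csc_mult_left: "(csc c M) ** X = csc c (M ** X)"
  by (simp add: csc_def vec_eq_iff matrix_matrix_mult_def sum_distrib_left mult.assoc)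
lemma csc_mult_right: "M ** (csc c X) = csc c (M ** X)"
  by (simp add: csc_def vec_eq_iff matrix_matrix_mult_def sum_distrib_left mult.assoc mult.left_commute)
lemma matrix_add_rdistrib': "(A + B) ** X = A ** X + B ** (X :: 'n::finite mt)"
  by (simp add: matrix_matrix_mult_def vec_eq_iff distrib_right sum.distrib)
lemma matrix_diff_rdistrib: "(A - B) ** X = A ** X - B ** (X :: 'n::finite mt)"
  by (simp add: matrix_matrix_mult_def vec_eq_iff left_diff_distrib sum_subtractf)
lemma matrix_diff_ldistrib: "X ** (A - B) = X ** A - X ** (B :: 'n::finite mt)"
  by (simp add: matrix_matrix_mult_def vec_eq_iff right_diff_distrib sum_subtractf)

lemma herm_skew: "herm_part A + csc \<i> (skew_part A) = A"
  by (simp add: herm_part_def skew_part_def csc_def vec_eq_iff field_simps)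
lemma herm_skew_adj: "herm_part A - csc \<i> (skew_part A) = cadj A"
  by (simp add: herm_part_def skew_part_def csc_def vec_eq_iff field_simps)

definition opL :: "('n::finite mt \<Rightarrow> 'n mt) \<Rightarrow> 'n op" where
  "opL f = Op (Blinfun f)"

lemma ap_opL: assumes "linear f" shows "ap (opL f) = f"
proof -
  have "bounded_linear f" using assms by (simp add: linear_conv_bounded_linear)
  then show ?thesis by (simp add: ap_def opL_def Op_inverse bounded_linear_Blinfun_apply)
qed

lemma linear_mt:
  fixes f :: "'n::finite mt \<Rightarrow> 'n mt"
  assumes "\<And>X Y. f (X + Y) = f X + f Y" "\<And>c X. f (csc c X) = csc c (f X)"
  shows "linear f"
  by (rule linearI) (simp_all add: assms scaleR_csc)

lemma linear_mulL: "linear (\<lambda>X::'n::finite mt. (M::'n mt) ** X)"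
  by (rule linear_mt) (simp_all add: matrix_add_ldistrib csc_mult_right)
lemma linear_mulR: "linear (\<lambda>X::'n::finite mt. X ** (M::'n mt))"
  by (rule linear_mt) (simp_all add: matrix_add_rdistrib' csc_mult_left)
lemma linear_csc: "linear (\<lambda>X::'n::finite mt. csc d X)"
  by (rule linear_mt) (simp_all add: csc_add csc_csc mult.commute)
lemma linear_sylv: "linear (\<lambda>X::'n::finite mt. csc d ((M::'n mt) ** X + X ** (N::'n mt)))"
  by (rule linear_mt) (simp_all add: matrix_add_ldistrib matrix_add_rdistrib' csc_mult_left csc_mult_right csc_add csc_csc mult.commute add_ac)

lemma mpow_comm: "mpow M n ** M = M ** mpow M n"
  by (induction n) (simp_all add: matrix_mul_assoc[symmetric])

definition mulL :: "'n::finite mt \<Rightarrow> 'n op" where "mulL M = opL (\<lambda>X. M ** X)"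
definition mulR :: "'n::finite mt \<Rightarrow> 'n op" where "mulR M = opL (\<lambda>X. X ** M)"

lemma ap_mulL[simp]: "ap (mulL M) X = M ** X"
  by (simp add: mulL_def ap_opL[OF linear_mulL])
lemma ap_mulR[simp]: "ap (mulR M) X = X ** M"
  by (simp add: mulR_def ap_opL[OF linear_mulR])

lemma ap_mulL_pow: "ap (mulL M ^ n) X = mpow M n ** X"
  by (induction n) (simp_all add: matrix_mul_assoc)
lemma ap_mulR_pow: "ap (mulR M ^ n) X = X ** mpow M n"
  by (induction n) (simp_all add: matrix_mul_assoc[symmetric] mpow_comm)

lemma bl_mt_right: "bounded_linear (\<lambda>Y::'n::finite mt. Y ** (X::'n mt))"
  using linear_mulR by (simp add: linear_conv_bounded_linear)
lemma bl_mt_left: "bounded_linear (\<lambda>Y::'n::finite mt. (X::'n mt) ** Y)"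
  using linear_mulL by (simp add: linear_conv_bounded_linear)

lemma exp_sums_ap: "(\<lambda>n. ap (K ^ n) X /\<^sub>R fact n) sums ap (exp K) X"
proof -
  have "(\<lambda>n. ap (K ^ n /\<^sub>R fact n) X) sums ap (exp K) X"
    by (rule bounded_linear.sums[OF bl_ap_left exp_converges])
  then show ?thesis by simp
qed

lemma one_div_scaleR: "(1 / c) *\<^sub>R x = x /\<^sub>R c"
  by (simp add: divide_inverse)

lemma mexp_sums: "(\<lambda>n. mpow M n /\<^sub>R fact n) sums ap (exp (mulL M)) (mat 1)"
  using exp_sums_ap[of "mulL M" "mat 1"] by (simp add: ap_mulL_pow)

lemma mexp_ap: "mexp M = ap (exp (mulL M)) (mat 1)"
  unfolding mexp_def one_div_scaleR using sums_unique[OF mexp_sums[of M]] by (rule sym)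

lemma mexp_mult_left: "mexp M ** X = ap (exp (mulL M)) X"
proof -
  have "(\<lambda>n. (mpow M n /\<^sub>R fact n) ** X) sums (ap (exp (mulL M)) (mat 1) ** X)"
    by (rule bounded_linear.sums[OF bl_mt_right mexp_sums])
  moreover have "(\<lambda>n. (mpow M n /\<^sub>R fact n) ** X) = (\<lambda>n. ap (mulL M ^ n) X /\<^sub>R fact n)"
    by (simp add: ap_mulL_pow scaleR_csc csc_mult_left)
  ultimately have "(\<lambda>n. ap (mulL M ^ n) X /\<^sub>R fact n) sums (ap (exp (mulL M)) (mat 1) ** X)"
    by simp
  with exp_sums_ap[of "mulL M" X] have "ap (exp (mulL M)) (mat 1) ** X = ap (exp (mulL M)) X"
    using sums_unique2 by blast
  then show ?thesis by (simp add: mexp_ap)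
qed

lemma mexp_mult_right: "X ** mexp M = ap (exp (mulR M)) X"
proof -
  have "(\<lambda>n. X ** (mpow M n /\<^sub>R fact n)) sums (X ** ap (exp (mulL M)) (mat 1))"
    by (rule bounded_linear.sums[OF bl_mt_left mexp_sums])
  moreover have "(\<lambda>n. X ** (mpow M n /\<^sub>R fact n)) = (\<lambda>n. ap (mulR M ^ n) X /\<^sub>R fact n)"
    by (simp add: ap_mulR_pow scaleR_csc csc_mult_right)
  ultimately have "(\<lambda>n. ap (mulR M ^ n) X /\<^sub>R fact n) sums (X ** ap (exp (mulL M)) (mat 1))"
    by simp
  with exp_sums_ap[of "mulR M" X] have "X ** ap (exp (mulL M)) (mat 1) = ap (exp (mulR M)) X"
    using sums_unique2 by blast
  then show ?thesis by (simp add: mexp_ap)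
qed

definition jm :: "'n::finite op" where "jm = opL (csc \<i>)"
definition KH :: "'n::finite mt \<Rightarrow> 'n mt \<Rightarrow> 'n op" where
  "KH A B = opL (\<lambda>X. csc (- \<i>) (herm_part A ** X + X ** herm_part B))"
definition KS :: "'n::finite mt \<Rightarrow> 'n mt \<Rightarrow> 'n op" where
  "KS A B = opL (\<lambda>X. csc (- \<i>) (skew_part A ** X + X ** skew_part B))"
definition TT :: "'n::finite mt \<Rightarrow> 'n mt \<Rightarrow> 'n op" where
  "TT A B = opL (\<lambda>X. A ** X + X ** B)"

lemma linear_sylv1: "linear (\<lambda>X::'n::finite mt. (M::'n mt) ** X + X ** (N::'n mt))"
  by (rule linear_mt) (simp_all add: matrix_add_ldistrib matrix_add_rdistrib' csc_mult_left csc_mult_right csc_add add_ac)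

lemma ap_jm[simp]: "ap jm X = csc \<i> X"
  by (simp add: jm_def ap_opL[OF linear_csc])
lemma ap_KH[simp]: "ap (KH A B) X = csc (- \<i>) (herm_part A ** X + X ** herm_part B)"
  by (simp add: KH_def ap_opL[OF linear_sylv])
lemma ap_KS[simp]: "ap (KS A B) X = csc (- \<i>) (skew_part A ** X + X ** skew_part B)"
  by (simp add: KS_def ap_opL[OF linear_sylv])
lemma ap_TT[simp]: "ap (TT A B) X = A ** X + X ** B"
  by (simp add: TT_def ap_opL[OF linear_sylv1])

lemma csc_i_i: "csc \<i> (csc \<i> X) = - X"
  by (simp add: csc_csc csc_minus_left)

lemma jm_sq: "jm * jm = (-1 :: 'n::finite op)"
  by (rule ap_eqI) (simp add: csc_i_i)

lemma jm_KH: "jm * KH A B = KH A B * jm"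
  by (rule ap_eqI) (simp add: csc_mult_left csc_mult_right csc_add csc_csc mult.commute)
lemma jm_KS: "jm * KS A B = KS A B * jm"
  by (rule ap_eqI) (simp add: csc_mult_left csc_mult_right csc_add csc_csc mult.commute)

lemma TT_decomp: "TT A B = jm * KH A B - KS A B"
proof (rule ap_eqI)
  fix X
  have "ap (jm * KH A B - KS A B) X
      = (herm_part A + csc \<i> (skew_part A)) ** X + X ** (herm_part B + csc \<i> (skew_part B))"
    by (simp add: matrix_add_ldistrib matrix_add_rdistrib' csc_mult_left csc_mult_right csc_add csc_csc
        csc_minus_left algebra_simps)
  then show "ap (TT A B) X = ap (jm * KH A B - KS A B) X" by (simp add: herm_skew)
qed

lemma TS_decomp: "TT (cadj A) (cadj B) = jm * KH A B + KS A B"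
proof (rule ap_eqI)
  fix X
  have "ap (jm * KH A B + KS A B) X
      = (herm_part A - csc \<i> (skew_part A)) ** X + X ** (herm_part B - csc \<i> (skew_part B))"
    by (simp add: matrix_diff_ldistrib matrix_diff_rdistrib csc_mult_left csc_mult_right csc_add csc_csc
        csc_minus_left algebra_simps)
  then show "ap (TT (cadj A) (cadj B)) X = ap (jm * KH A B + KS A B) X" by (simp add: herm_skew_adj)
qed

lemma mulLR_K:
  "mulL (csc (- \<i> * complex_of_real w * complex_of_real t) (herm_part A)
       + csc (- \<i> * complex_of_real w' * complex_of_real t) (skew_part A))
   + mulR (csc (- \<i> * complex_of_real w * complex_of_real t) (herm_part B)
       + csc (- \<i> * complex_of_real w' * complex_of_real t) (skew_part B))
   = (w * t) *\<^sub>R KH A B + (w' * t) *\<^sub>R KS A B"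
proof (rule ap_eqI)
  fix X
  have e1: "complex_of_real (w * t) * - \<i> = - \<i> * complex_of_real w * complex_of_real t" by simp
  have e2: "complex_of_real (w' * t) * - \<i> = - \<i> * complex_of_real w' * complex_of_real t" by simp
  show "ap (mulL (csc (- \<i> * complex_of_real w * complex_of_real t) (herm_part A)
       + csc (- \<i> * complex_of_real w' * complex_of_real t) (skew_part A))
   + mulR (csc (- \<i> * complex_of_real w * complex_of_real t) (herm_part B)
       + csc (- \<i> * complex_of_real w' * complex_of_real t) (skew_part B))) X
   = ap ((w * t) *\<^sub>R KH A B + (w' * t) *\<^sub>R KS A B) X"
    unfolding ap_add ap_scaleR ap_mulL ap_mulR ap_KH ap_KS scaleR_csc csc_csc e1 e2
    by (simp only: matrix_add_ldistrib matrix_add_rdistrib' csc_mult_left csc_mult_right csc_add add_ac)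
qed

lemma csc_decomp:
  "csc (complex_of_real e * (\<i> * complex_of_real w + complex_of_real w')) Y
   = (e * w') *\<^sub>R Y + (e * w) *\<^sub>R ap jm Y"
  by (simp add: scaleR_csc csc_csc csc_add_left[symmetric] algebra_simps)

definition vecm :: "'n::finite mt \<Rightarrow> complex^('n \<times> 'n)" where
  "vecm X = (\<chi> p. X $ fst p $ snd p)"
definition unvec :: "complex^('n::finite \<times> 'n) \<Rightarrow> 'n mt" where
  "unvec v = (\<chi> i j. v $ (i, j))"

lemma unvec_vecm[simp]: "unvec (vecm X) = X"
  by (simp add: vecm_def unvec_def vec_eq_iff)
lemma vecm_unvec[simp]: "vecm (unvec v) = v"
  by (simp add: vecm_def unvec_def vec_eq_iff)

lemma sum_pair_UNIV: "(\<Sum>q\<in>(UNIV :: ('a::finite \<times> 'b::finite) set). f q) = (\<Sum>k\<in>UNIV. \<Sum>l\<in>UNIV. f (k, l))"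
  by (simp add: sum.cartesian_product)

lemma kron_vecm: "kron_sum A B *v vecm X = vecm (A ** X + X ** B)"
proof -
  have "(kron_sum A B *v vecm X) $ (i, j) = vecm (A ** X + X ** B) $ (i, j)" for i j
  proof -
    have "(kron_sum A B *v vecm X) $ (i, j)
        = (\<Sum>k\<in>UNIV. \<Sum>l\<in>UNIV. (A $ i $ k * (if j = l then 1 else 0) + (if i = k then 1 else 0) * B $ l $ j) * X $ k $ l)"
      by (simp add: matrix_vector_mult_def kron_sum_def vecm_def sum_pair_UNIV)
    also have "\<dots> = (\<Sum>k\<in>UNIV. \<Sum>l\<in>UNIV. (if l = j then A $ i $ k * X $ k $ l else 0) + (if k = i then X $ k $ l * B $ l $ j else 0))"
      by (intro sum.cong refl) (auto simp: algebra_simps)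
    also have "\<dots> = (\<Sum>k\<in>UNIV. A $ i $ k * X $ k $ j) + (\<Sum>l\<in>UNIV. X $ i $ l * B $ l $ j)"
    proof -
      have aux: "(\<Sum>k\<in>UNIV. \<Sum>l\<in>UNIV. if k = i then g k l else 0) = (\<Sum>l\<in>UNIV. g i l)"
        for g :: "'a \<Rightarrow> 'a \<Rightarrow> complex"
      proof -
        have "(\<Sum>k\<in>UNIV. \<Sum>l\<in>UNIV. if k = i then g k l else 0) = (\<Sum>k\<in>UNIV. if k = i then (\<Sum>l\<in>UNIV. g k l) else 0)"
          by (intro sum.cong refl) auto
        then show ?thesis by simp
      qed
      show ?thesis by (simp only: sum.distrib sum.delta sum.delta' finite UNIV_I if_True aux)
    qed
    also have "\<dots> = vecm (A ** X + X ** B) $ (i, j)"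
      by (simp add: vecm_def matrix_matrix_mult_def)
    finally show ?thesis .
  qed
  then show ?thesis by (simp add: vec_eq_iff)
qed

lemma cadj_kron: "cadj (kron_sum A B) = kron_sum (cadj A) (cadj B)"
  by (auto simp: vec_eq_iff cadj_def kron_sum_def)


lemma TT_normal:
  assumes "normal_mat (kron_sum A B)"
  shows "TT A B * TT (cadj A) (cadj B) = TT (cadj A) (cadj B) * TT A B"
proof (rule ap_eqI)
  fix X
  let ?K = "kron_sum A B" and ?K' = "kron_sum (cadj A) (cadj B)"
  have N: "?K ** ?K' = ?K' ** ?K" using assms by (simp add: normal_mat_def cadj_kron)
  have "vecm (ap (TT A B * TT (cadj A) (cadj B)) X) = ?K *v (?K' *v vecm X)"
    by (simp only: ap_mult ap_TT kron_vecm[symmetric])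
  also have "\<dots> = ?K' *v (?K *v vecm X)"
    by (simp add: matrix_vector_mul_assoc N)
  also have "\<dots> = vecm (ap (TT (cadj A) (cadj B) * TT A B) X)"
    by (simp only: ap_mult ap_TT kron_vecm[symmetric])
  finally show "ap (TT A B * TT (cadj A) (cadj B)) X = ap (TT (cadj A) (cadj B) * TT A B) X"
    by (metis unvec_vecm)
qed

lemma inner_mt: "inner X Y = Re (\<Sum>i\<in>UNIV. \<Sum>j\<in>UNIV. X $ i $ j * cnj (Y $ i $ j))"
  by (simp add: inner_vec_def inner_complex_def Re_sum)

lemma adj_left: "inner (cadj M ** U) V = inner U (M ** (V :: 'n::finite mt))"
proof -
  define f where "f i j k = cnj (M $ k $ i) * U $ k $ j * cnj (V $ i $ j)" for i j k
  have "inner (cadj M ** U) V = Re (\<Sum>i\<in>UNIV. \<Sum>j\<in>UNIV. \<Sum>k\<in>UNIV. f i j k)"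
    by (simp add: inner_mt matrix_matrix_mult_def cadj_def f_def sum_distrib_right)
  also have "(\<Sum>i\<in>UNIV. \<Sum>j\<in>UNIV. \<Sum>k\<in>UNIV. f i j k) = (\<Sum>i\<in>UNIV. \<Sum>k\<in>UNIV. \<Sum>j\<in>UNIV. f i j k)"
    by (rule sum.cong[OF refl], rule sum.swap)
  also have "\<dots> = (\<Sum>k\<in>UNIV. \<Sum>i\<in>UNIV. \<Sum>j\<in>UNIV. f i j k)"
    by (rule sum.swap)
  also have "\<dots> = (\<Sum>k\<in>UNIV. \<Sum>j\<in>UNIV. \<Sum>i\<in>UNIV. f i j k)"
    by (rule sum.cong[OF refl], rule sum.swap)
  also have "Re \<dots> = inner U (M ** V)"
    by (simp add: inner_mt matrix_matrix_mult_def f_def sum_distrib_left mult_ac)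
  finally show ?thesis .
qed

lemma adj_right: "inner (U ** cadj N) V = inner U (V ** (N :: 'n::finite mt))"
proof -
  define g where "g i j l = U $ i $ l * cnj (N $ j $ l) * cnj (V $ i $ j)" for i j l
  have "inner (U ** cadj N) V = Re (\<Sum>i\<in>UNIV. \<Sum>j\<in>UNIV. \<Sum>l\<in>UNIV. g i j l)"
    by (simp add: inner_mt matrix_matrix_mult_def cadj_def g_def sum_distrib_right)
  also have "(\<Sum>i\<in>UNIV. \<Sum>j\<in>UNIV. \<Sum>l\<in>UNIV. g i j l) = (\<Sum>i\<in>UNIV. \<Sum>l\<in>UNIV. \<Sum>j\<in>UNIV. g i j l)"
    by (rule sum.cong[OF refl], rule sum.swap)
  also have "Re \<dots> = inner U (V ** N)"
    by (simp add: inner_mt matrix_matrix_mult_def g_def sum_distrib_left mult_ac)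
  finally show ?thesis .
qed

lemma TT_adj: "inner (ap (TT (cadj A) (cadj B)) U) V = inner U (ap (TT A B) V)"
  by (simp add: inner_add_left inner_add_right adj_left adj_right)

lemma linear_inv:
  fixes K' :: "complex^('n::finite \<times> 'n)^('n \<times> 'n)"
  shows "linear (\<lambda>X. unvec (K' *v vecm X))"
  by (rule linearI) (simp_all add: vec_eq_iff unvec_def vecm_def matrix_vector_mult_def
      sum.distrib distrib_left scaleR_sum_right)

lemma TT_inv:
  assumes "invertible (kron_sum A B)"
  obtains Ti :: "'n::finite op" where "\<And>X. ap Ti (ap (TT A B) X) = X" "\<And>X. ap (TT A B) (ap Ti X) = X"
proof -
  obtain K' where K': "kron_sum A B ** K' = mat 1" "K' ** kron_sum A B = mat 1"
    using assms unfolding invertible_def by blast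
  define Ti :: "'n op" where "Ti = opL (\<lambda>X. unvec (K' *v vecm X))"
  have apTi: "ap Ti X = unvec (K' *v vecm X)" for X
    unfolding Ti_def by (simp add: ap_opL[OF linear_inv])
  show ?thesis
  proof (rule that)
    fix X
    show "ap Ti (ap (TT A B) X) = X"
      by (simp only: apTi ap_TT kron_vecm[symmetric] matrix_vector_mul_assoc K' matrix_vector_mul_lid unvec_vecm)
    show "ap (TT A B) (ap Ti X) = X"
    proof -
      have "vecm (ap (TT A B) (ap Ti X)) = vecm X"
        by (simp only: apTi ap_TT kron_vecm[symmetric] vecm_unvec matrix_vector_mul_assoc K' matrix_vector_mul_lid)
      then show ?thesis by (metis unvec_vecm)
    qed
  qed
qed

lemma mulLR_commute: "mulR N * mulL M = mulL M * mulR N"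
  by (rule ap_eqI) (simp add: matrix_mul_assoc)

lemma scaled_commute: "H * S = S * H \<Longrightarrow> (a *\<^sub>R H) * (b *\<^sub>R S) = (b *\<^sub>R S) * (a *\<^sub>R (H::'n::finite op))"
  by simp

lemma F_form:
  fixes A B C :: "complex^'n::finite^'n"
  assumes HS: "KH A B * KS A B = KS A B * KH A B"
  shows "csc (complex_of_real (exp (- (w\<^sup>2 + w'\<^sup>2) / 2)) * (\<i> * w + w'))
              (mexp (csc (- \<i> * w * t) (herm_part A) + csc (- \<i> * w' * t) (skew_part A))
               ** C **
               mexp (csc (- \<i> * w * t) (herm_part B) + csc (- \<i> * w' * t) (skew_part B)))
       = (exp (- w\<^sup>2 / 2) * exp (- w'\<^sup>2 / 2) * w') *\<^sub>R ap (exp ((w * t) *\<^sub>R KH A B)) (ap (exp ((w' * t) *\<^sub>R KS A B)) C)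
         + (exp (- w\<^sup>2 / 2) * exp (- w'\<^sup>2 / 2) * w) *\<^sub>R ap jm (ap (exp ((w * t) *\<^sub>R KH A B)) (ap (exp ((w' * t) *\<^sub>R KS A B)) C))"
proof -
  let ?M = "csc (- \<i> * w * t) (herm_part A) + csc (- \<i> * w' * t) (skew_part A)"
  let ?N = "csc (- \<i> * w * t) (herm_part B) + csc (- \<i> * w' * t) (skew_part B)"
  have "mexp ?M ** C ** mexp ?N = ap (exp (mulR ?N)) (ap (exp (mulL ?M)) C)"
    by (simp add: mexp_mult_left mexp_mult_right)
  also have "\<dots> = ap (exp (mulR ?N) * exp (mulL ?M)) C" by simp
  also have "\<dots> = ap (exp (mulL ?M + mulR ?N)) C"
    by (simp add: exp_add_commuting[OF mulLR_commute, symmetric] add.commute)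
  also have "mulL ?M + mulR ?N = (w * t) *\<^sub>R KH A B + (w' * t) *\<^sub>R KS A B"
    by (rule mulLR_K)
  also have "exp ((w * t) *\<^sub>R KH A B + (w' * t) *\<^sub>R KS A B) = exp ((w * t) *\<^sub>R KH A B) * exp ((w' * t) *\<^sub>R KS A B)"
    by (rule exp_add_commuting) (simp add: HS)
  finally have G: "mexp ?M ** C ** mexp ?N = ap (exp ((w * t) *\<^sub>R KH A B)) (ap (exp ((w' * t) *\<^sub>R KS A B)) C)"
    by simp
  have e: "exp (- (w\<^sup>2 + w'\<^sup>2) / 2) = exp (- w\<^sup>2 / 2) * exp (- w'\<^sup>2 / 2)"
    by (simp add: exp_add[symmetric] field_simps)
  show ?thesis unfolding G e csc_decomp by simp
qed

lemma inner_int: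
  fixes H S :: "'n::finite op"
  shows "((\<lambda>w'. (exp (- w\<^sup>2 / 2) * exp (- w'\<^sup>2 / 2) * w') *\<^sub>R ap (exp ((w * t) *\<^sub>R H)) (ap (exp ((w' * t) *\<^sub>R S)) C)
         + (exp (- w\<^sup>2 / 2) * exp (- w'\<^sup>2 / 2) * w) *\<^sub>R ap jm (ap (exp ((w * t) *\<^sub>R H)) (ap (exp ((w' * t) *\<^sub>R S)) C)))
     has_integral
       (exp (- w\<^sup>2 / 2) *\<^sub>R ap (exp ((w * t) *\<^sub>R H)) (sqrt (2*pi) *\<^sub>R (t *\<^sub>R ap S (ap (exp ((t\<^sup>2/2) *\<^sub>R (S*S))) C)))
        + (exp (- w\<^sup>2 / 2) * w) *\<^sub>R ap jm (ap (exp ((w * t) *\<^sub>R H)) (sqrt (2*pi) *\<^sub>R ap (exp ((t\<^sup>2/2) *\<^sub>R (S*S))) C)))) UNIV"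
proof -
  let ?U = "exp ((w * t) *\<^sub>R H)"
  have h1: "((\<lambda>w'. exp (- w\<^sup>2 / 2) *\<^sub>R ap ?U ((w' * exp (- w'\<^sup>2 / 2)) *\<^sub>R ap (exp ((w' * t) *\<^sub>R S)) C))
      has_integral exp (- w\<^sup>2 / 2) *\<^sub>R ap ?U (sqrt (2*pi) *\<^sub>R (t *\<^sub>R ap S (ap (exp ((t\<^sup>2/2) *\<^sub>R (S*S))) C)))) UNIV"
    using has_integral_cmul[OF has_integral_linear[OF gauss1[where K=S and Y=C and s=t] bl_ap[of ?U]], of "exp (- w\<^sup>2 / 2)"]
    by (simp add: o_def)
  have h0: "((\<lambda>w'. (exp (- w\<^sup>2 / 2) * w) *\<^sub>R ap jm (ap ?U (exp (- w'\<^sup>2 / 2) *\<^sub>R ap (exp ((w' * t) *\<^sub>R S)) C)))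
      has_integral (exp (- w\<^sup>2 / 2) * w) *\<^sub>R ap jm (ap ?U (sqrt (2*pi) *\<^sub>R ap (exp ((t\<^sup>2/2) *\<^sub>R (S*S))) C))) UNIV"
    using has_integral_cmul[OF has_integral_linear[OF has_integral_linear[OF gauss0[where K=S and Y=C and s=t] bl_ap[of ?U]] bl_ap[of jm]],
      of "exp (- w\<^sup>2 / 2) * w"]
    by (simp add: o_def)
  have eqf: "(\<lambda>w'. exp (- w\<^sup>2 / 2) *\<^sub>R ap ?U ((w' * exp (- w'\<^sup>2 / 2)) *\<^sub>R ap (exp ((w' * t) *\<^sub>R S)) C)
        + (exp (- w\<^sup>2 / 2) * w) *\<^sub>R ap jm (ap ?U (exp (- w'\<^sup>2 / 2) *\<^sub>R ap (exp ((w' * t) *\<^sub>R S)) C)))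
      = (\<lambda>w'. (exp (- w\<^sup>2 / 2) * exp (- w'\<^sup>2 / 2) * w') *\<^sub>R ap ?U (ap (exp ((w' * t) *\<^sub>R S)) C)
         + (exp (- w\<^sup>2 / 2) * exp (- w'\<^sup>2 / 2) * w) *\<^sub>R ap jm (ap ?U (ap (exp ((w' * t) *\<^sub>R S)) C)))"
    by (rule ext) (simp add: mult_ac)
  show ?thesis by (subst eqf[symmetric]) (rule has_integral_add[OF h1 h0])
qed

lemma outer_int:
  fixes H :: "'n::finite op"
  shows "((\<lambda>w. exp (- w\<^sup>2 / 2) *\<^sub>R ap (exp ((w * t) *\<^sub>R H)) Z1
              + (exp (- w\<^sup>2 / 2) * w) *\<^sub>R ap jm (ap (exp ((w * t) *\<^sub>R H)) Z0))
     has_integral (sqrt (2*pi) *\<^sub>R ap (exp ((t\<^sup>2/2) *\<^sub>R (H*H))) Z1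
        + ap jm (sqrt (2*pi) *\<^sub>R (t *\<^sub>R ap H (ap (exp ((t\<^sup>2/2) *\<^sub>R (H*H))) Z0))))) UNIV"
proof -
  have h1: "((\<lambda>w. exp (- w\<^sup>2 / 2) *\<^sub>R ap (exp ((w * t) *\<^sub>R H)) Z1) has_integral
      (sqrt (2*pi) *\<^sub>R ap (exp ((t\<^sup>2/2) *\<^sub>R (H*H))) Z1)) UNIV"
    by (rule gauss0)
  have h0: "((\<lambda>w. ap jm ((w * exp (- w\<^sup>2 / 2)) *\<^sub>R ap (exp ((w * t) *\<^sub>R H)) Z0)) has_integral
      ap jm (sqrt (2*pi) *\<^sub>R (t *\<^sub>R ap H (ap (exp ((t\<^sup>2/2) *\<^sub>R (H*H))) Z0)))) UNIV"
    using has_integral_linear[OF gauss1[where K=H and Y=Z0 and s=t] bl_ap[of jm]] by (simp add: o_def)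
  have eqf: "(\<lambda>w. exp (- w\<^sup>2 / 2) *\<^sub>R ap (exp ((w * t) *\<^sub>R H)) Z1
         + ap jm ((w * exp (- w\<^sup>2 / 2)) *\<^sub>R ap (exp ((w * t) *\<^sub>R H)) Z0))
      = (\<lambda>w. exp (- w\<^sup>2 / 2) *\<^sub>R ap (exp ((w * t) *\<^sub>R H)) Z1
              + (exp (- w\<^sup>2 / 2) * w) *\<^sub>R ap jm (ap (exp ((w * t) *\<^sub>R H)) Z0))"
    by (rule ext) (simp add: mult_ac)
  show ?thesis by (subst eqf[symmetric]) (rule has_integral_add[OF h1 h0])
qed

lemma comm_mult: "a * x = x * a \<Longrightarrow> b * x = x * b \<Longrightarrow> (a * b) * x = x * (a * (b::'a::ring))"
  by (metis mult.assoc)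
lemma comm_add: "a * x = x * a \<Longrightarrow> b * x = x * b \<Longrightarrow> (a + b) * x = x * (a + (b::'a::ring))"
  by (simp add: algebra_simps)

lemma J_simp:
  fixes H S :: "'n::finite op"
  assumes HS: "H * S = S * H" and jH: "jm * H = H * jm" and jS: "jm * S = S * jm"
  shows "sqrt (2*pi) *\<^sub>R ap (exp ((t\<^sup>2/2) *\<^sub>R (H*H))) (sqrt (2*pi) *\<^sub>R (t *\<^sub>R ap S (ap (exp ((t\<^sup>2/2) *\<^sub>R (S*S))) C)))
        + ap jm (sqrt (2*pi) *\<^sub>R (t *\<^sub>R ap H (ap (exp ((t\<^sup>2/2) *\<^sub>R (H*H))) (sqrt (2*pi) *\<^sub>R ap (exp ((t\<^sup>2/2) *\<^sub>R (S*S))) C))))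
       = (2*pi) *\<^sub>R (t *\<^sub>R ap (exp ((t\<^sup>2/2) *\<^sub>R (H*H + S*S))) (ap (jm * H + S) C))"
proof -
  let ?EH = "exp ((t\<^sup>2/2) *\<^sub>R (H*H))" and ?ES = "exp ((t\<^sup>2/2) *\<^sub>R (S*S))"
  have s2: "sqrt (2*pi) * (sqrt (2*pi) * t) = 2*pi*t" "sqrt (2*pi) * (t * sqrt (2*pi)) = 2*pi*t"
    by (simp_all add: mult.assoc[symmetric])
  have SH2: "S * ((t\<^sup>2/2) *\<^sub>R (H*H)) = ((t\<^sup>2/2) *\<^sub>R (H*H)) * S"
    using comm_mult[OF HS HS] by simp
  have SEH: "S * ?EH = ?EH * S" by (rule exp_commute[OF SH2])
  have HHSS: "((t\<^sup>2/2) *\<^sub>R (H*H)) * ((t\<^sup>2/2) *\<^sub>R (S*S)) = ((t\<^sup>2/2) *\<^sub>R (S*S)) * ((t\<^sup>2/2) *\<^sub>R (H*H))"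
  proof -
    have "(S*S) * H = H * (S*S)" using comm_mult[OF HS[symmetric] HS[symmetric]] by simp
    then have "(S*S) * (H*H) = (H*H) * (S*S)" using comm_mult[of H "S*S" H] by (metis mult.assoc)
    then show ?thesis by simp
  qed
  have EE: "?EH * ?ES = exp ((t\<^sup>2/2) *\<^sub>R (H*H + S*S))"
    by (simp add: exp_add_commuting[OF HHSS, symmetric] scaleR_add_right)
  let ?X = "jm * H + S"
  have a1: "H * (jm * H) = jm * H * H" by (metis jH mult.assoc)
  have a2: "S * (jm * H) = jm * H * S" by (metis jS HS mult.assoc)
  have XH: "H * ?X = ?X * H"
    by (simp only: distrib_left distrib_right a1 HS)
  have XS: "S * ?X = ?X * S"
    by (simp only: distrib_left distrib_right a2)
  have Xc: "((t\<^sup>2/2) *\<^sub>R (H*H + S*S)) * ?X = ?X * ((t\<^sup>2/2) *\<^sub>R (H*H + S*S))"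
    using comm_add[OF comm_mult[OF XH XH] comm_mult[OF XS XS]] by simp
  have XE: "?X * exp ((t\<^sup>2/2) *\<^sub>R (H*H + S*S)) = exp ((t\<^sup>2/2) *\<^sub>R (H*H + S*S)) * ?X"
    by (rule exp_commute) (rule Xc[symmetric])
  have "sqrt (2*pi) *\<^sub>R ap ?EH (sqrt (2*pi) *\<^sub>R (t *\<^sub>R ap S (ap ?ES C)))
        + ap jm (sqrt (2*pi) *\<^sub>R (t *\<^sub>R ap H (ap ?EH (sqrt (2*pi) *\<^sub>R ap ?ES C))))
      = (2*pi) *\<^sub>R (t *\<^sub>R (ap (?EH * S * ?ES) C + ap (jm * H * ?EH * ?ES) C))"
    by (simp add: s2 scaleR_add_right)
  also have "ap (?EH * S * ?ES) C + ap (jm * H * ?EH * ?ES) C = ap (?X * (?EH * ?ES)) C"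
    by (simp add: SEH[symmetric] distrib_right mult.assoc)
  also have "\<dots> = ap (exp ((t\<^sup>2/2) *\<^sub>R (H*H + S*S))) (ap ?X C)"
    by (simp only: EE XE ap_mult)
  finally show ?thesis .
qed

theorem mainTheorem11:
  fixes A B C :: "complex^'n::finite^'n"
  assumes "normal_mat (kron_sum A B)" and "invertible (kron_sum A B)"
  defines "F \<equiv> (\<lambda>(t::real) (\<omega>::real) (\<omega>'::real).
              csc (complex_of_real (exp (- (\<omega>\<^sup>2 + \<omega>'\<^sup>2) / 2)) * (\<i> * \<omega> + \<omega>'))
              (mexp (csc (- \<i> * \<omega> * t) (herm_part A) + csc (- \<i> * \<omega>' * t) (skew_part A))
               ** C **
               mexp (csc (- \<i> * \<omega> * t) (herm_part B) + csc (- \<i> * \<omega>' * t) (skew_part B))))"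
  shows "(\<exists>!X. A ** X + X ** B = C) \<and>
         (\<forall>X. A ** X + X ** B = C \<longrightarrow>
            (\<forall>t \<omega>. (\<lambda>\<omega>'. F t \<omega> \<omega>') integrable_on UNIV) \<and>
            (\<forall>t. (\<lambda>\<omega>. integral UNIV (\<lambda>\<omega>'. F t \<omega> \<omega>')) integrable_on UNIV) \<and>
            (\<lambda>t. integral UNIV (\<lambda>\<omega>. integral UNIV (\<lambda>\<omega>'. F t \<omega> \<omega>'))) integrable_on {0..} \<and>
            X = (1 / (2 * pi)) *\<^sub>R
                  integral {0..} (\<lambda>t. integral UNIV (\<lambda>\<omega>. integral UNIV (\<lambda>\<omega>'. F t \<omega> \<omega>'))))"
proof -
  let ?H = "KH A B" and ?S = "KS A B"
  let ?T = "TT A B" and ?Ts = "TT (cadj A) (cadj B)"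
  have jH: "jm * ?H = ?H * jm" by (rule jm_KH)
  have jS: "jm * ?S = ?S * jm" by (rule jm_KS)
  have jj: "jm * jm = (-1 :: 'n op)" by (rule jm_sq)
  have N: "?T * ?Ts = ?Ts * ?T" by (rule TT_normal[OF assms(1)])
  have e1: "?S * (jm * ?H) = jm * (?S * ?H)" using jS by (metis mult.assoc)
  have e2: "jm * ?H * (jm * ?H) = - (?H * ?H)"
  proof -
    have "jm * ?H * (jm * ?H) = jm * (?H * jm) * ?H" by (simp only: mult.assoc)
    also have "\<dots> = jm * (jm * ?H) * ?H" by (simp only: jH[symmetric])
    also have "\<dots> = (jm * jm) * (?H * ?H)" by (simp only: mult.assoc)
    also have "\<dots> = - (?H * ?H)" by (simp add: jj)
    finally show ?thesis .
  qed
  have HS: "?H * ?S = ?S * ?H"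
  proof -
    have "(jm * ?H - ?S) * (jm * ?H + ?S) - (jm * ?H + ?S) * (jm * ?H - ?S) = 2 *\<^sub>R (jm * ?H * ?S - ?S * (jm * ?H))"
      by (simp add: algebra_simps scaleR_2)
    moreover have "(jm * ?H - ?S) * (jm * ?H + ?S) - (jm * ?H + ?S) * (jm * ?H - ?S) = 0"
      using N by (simp only: TS_decomp TT_decomp[of A B] diff_self)
    ultimately have "jm * ?H * ?S = ?S * (jm * ?H)" by simp
    then have "jm * (?H * ?S) = jm * (?S * ?H)" by (simp add: e1 mult.assoc)
    then have "(jm * jm) * (?H * ?S) = (jm * jm) * (?S * ?H)" by (simp add: mult.assoc)
    then show ?thesis by (simp add: jj)
  qed
  define Q where "Q = ?Ts * ?T"
  have Qeq: "?H * ?H + ?S * ?S = - Q"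
  proof -
    have "Q = (jm * ?H + ?S) * (jm * ?H - ?S)" by (simp only: Q_def TS_decomp TT_decomp[of A B])
    also have "\<dots> = jm * ?H * (jm * ?H) - jm * ?H * ?S + ?S * (jm * ?H) - ?S * ?S"
      by (simp add: algebra_simps)
    also have "\<dots> = - (?H * ?H) - jm * ?H * ?S + jm * (?S * ?H) - ?S * ?S"
      by (simp only: e1 e2)
    also have "\<dots> = - (?H * ?H) - ?S * ?S"
      by (simp add: HS mult.assoc)
    finally show ?thesis by simp
  qed
  obtain Ti where Ti1: "\<And>X. ap Ti (ap ?T X) = X" and Ti2: "\<And>X. ap ?T (ap Ti X) = X"
    using TT_inv[OF assms(2)] by blast
  define lm where "lm = 1 / (norm Ti + 1)\<^sup>2"
  have c0: "0 < norm Ti + 1" by (simp add: add_nonneg_pos)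
  have lm0: "0 < lm" unfolding lm_def using c0 by simp
  have pos: "lm * (norm y)\<^sup>2 \<le> inner (ap Q y) y" for y
  proof -
    have "norm y = norm (ap Ti (ap ?T y))" by (simp only: Ti1)
    also have "\<dots> \<le> norm Ti * norm (ap ?T y)" by (rule norm_ap)
    also have "\<dots> \<le> (norm Ti + 1) * norm (ap ?T y)" by (simp add: mult_right_mono)
    finally have "norm y \<le> (norm Ti + 1) * norm (ap ?T y)" .
    then have "(norm y)\<^sup>2 \<le> ((norm Ti + 1) * norm (ap ?T y))\<^sup>2"
      by (rule power_mono) simp
    then have "lm * (norm y)\<^sup>2 \<le> lm * ((norm Ti + 1) * norm (ap ?T y))\<^sup>2"
      using lm0 by (intro mult_left_mono) auto
    also have "\<dots> = (norm (ap ?T y))\<^sup>2"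
      unfolding lm_def using c0 by (simp add: power_mult_distrib)
    also have "\<dots> = inner (ap Q y) y"
      by (simp only: Q_def ap_mult TT_adj power2_norm_eq_inner)
    finally show ?thesis .
  qed
  have sol: "A ** X + X ** B = C \<longleftrightarrow> X = ap Ti C" for X
  proof
    assume "A ** X + X ** B = C"
    then have "ap ?T X = C" by simp
    then show "X = ap Ti C" using Ti1[of X] by simp
  next
    assume "X = ap Ti C"
    then show "A ** X + X ** B = C" using Ti2[of C] by simp
  qed
  show ?thesis
  proof (intro conjI allI impI)
    show "\<exists>!X. A ** X + X ** B = C" by (simp add: sol)
  next
    fix X assume hX: "A ** X + X ** B = C"
    have CX: "C = ap ?T X" using hX by simp
    define ES where "ES t = exp ((t\<^sup>2/2) *\<^sub>R (?S * ?S))" for t :: real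
    define EH where "EH t = exp ((t\<^sup>2/2) *\<^sub>R (?H * ?H))" for t :: real
    define Z1 where "Z1 t = sqrt (2*pi) *\<^sub>R (t *\<^sub>R ap ?S (ap (ES t) C))" for t
    define Z0 where "Z0 t = sqrt (2*pi) *\<^sub>R ap (ES t) C" for t
    define I1 where "I1 t w = exp (- w\<^sup>2 / 2) *\<^sub>R ap (exp ((w * t) *\<^sub>R ?H)) (Z1 t)
        + (exp (- w\<^sup>2 / 2) * w) *\<^sub>R ap jm (ap (exp ((w * t) *\<^sub>R ?H)) (Z0 t))" for t w
    define J where "J t = (2*pi) *\<^sub>R (t *\<^sub>R ap (exp ((t\<^sup>2/2) *\<^sub>R (- Q))) (ap Q X))" for t
    have inner: "((\<lambda>w'. F t w w') has_integral I1 t w) UNIV" for t w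
    proof -
      have "(\<lambda>w'. F t w w') = (\<lambda>w'. (exp (- w\<^sup>2 / 2) * exp (- w'\<^sup>2 / 2) * w') *\<^sub>R ap (exp ((w * t) *\<^sub>R ?H)) (ap (exp ((w' * t) *\<^sub>R ?S)) C)
         + (exp (- w\<^sup>2 / 2) * exp (- w'\<^sup>2 / 2) * w) *\<^sub>R ap jm (ap (exp ((w * t) *\<^sub>R ?H)) (ap (exp ((w' * t) *\<^sub>R ?S)) C)))"
        unfolding F_def by (rule ext) (simp only: F_form[OF HS] prod.case)
      then show ?thesis unfolding I1_def Z1_def Z0_def ES_def using inner_int[where w=w and t=t and H="?H" and S="?S" and C=C] by simp
    qed
    have outer: "((\<lambda>w. integral UNIV (\<lambda>w'. F t w w')) has_integral J t) UNIV" for t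
    proof -
      have "(\<lambda>w. integral UNIV (\<lambda>w'. F t w w')) = I1 t"
        by (intro ext integral_unique inner)
      moreover have "(I1 t has_integral (sqrt (2*pi) *\<^sub>R ap (EH t) (Z1 t)
        + ap jm (sqrt (2*pi) *\<^sub>R (t *\<^sub>R ap ?H (ap (EH t) (Z0 t)))))) UNIV"
        unfolding I1_def EH_def by (rule outer_int)
      moreover have "sqrt (2*pi) *\<^sub>R ap (EH t) (Z1 t) + ap jm (sqrt (2*pi) *\<^sub>R (t *\<^sub>R ap ?H (ap (EH t) (Z0 t))))
          = J t"
      proof -
        have "sqrt (2*pi) *\<^sub>R ap (EH t) (Z1 t) + ap jm (sqrt (2*pi) *\<^sub>R (t *\<^sub>R ap ?H (ap (EH t) (Z0 t))))
            = (2*pi) *\<^sub>R (t *\<^sub>R ap (exp ((t\<^sup>2/2) *\<^sub>R (?H * ?H + ?S * ?S))) (ap (jm * ?H + ?S) C))"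
          unfolding EH_def Z1_def Z0_def ES_def by (rule J_simp[OF HS jH jS])
        also have "ap (jm * ?H + ?S) C = ap Q X"
          by (simp only: CX Q_def TS_decomp[symmetric] ap_mult)
        finally show ?thesis unfolding J_def Qeq .
      qed
      ultimately show ?thesis by simp
    qed
    have tint: "((\<lambda>t. integral UNIV (\<lambda>w. integral UNIV (\<lambda>w'. F t w w'))) has_integral (2*pi) *\<^sub>R X) {0..}"
    proof -
      have "(\<lambda>t. integral UNIV (\<lambda>w. integral UNIV (\<lambda>w'. F t w w'))) = J"
        by (intro ext integral_unique outer)
      moreover have "(J has_integral (2*pi) *\<^sub>R X) {0..}"
        unfolding J_def by (rule has_integral_cmul[OF t_integral[OF pos lm0]])
      ultimately show ?thesis by simp
    qed
    show "(\<lambda>w'. F t w w') integrable_on UNIV" for t w using inner by blast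
    show "(\<lambda>w. integral UNIV (\<lambda>w'. F t w w')) integrable_on UNIV" for t using outer by blast
    show "(\<lambda>t. integral UNIV (\<lambda>w. integral UNIV (\<lambda>w'. F t w w'))) integrable_on {0..}" using tint by blast
    show "X = (1 / (2 * pi)) *\<^sub>R integral {0..} (\<lambda>t. integral UNIV (\<lambda>w. integral UNIV (\<lambda>w'. F t w w')))"
      using integral_unique[OF tint] by simp
  qed
qed

end
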